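(* Let $f=\sum_{|\alpha|=d}c_\alpha x^\alpha\in\mathbb{R}[x_1,\dots,x_n]$ be a form of degree $d\ge1$ with $c_\alpha>0$ for all $\alpha\in\mathbb{Z}_{\ge0}^n$ with $|\alpha|=d$. Let $A=\{p/f^r: r\ge0,\ p\in\mathbb{R}[x_1,\dots,x_n] \text{ homogeneous of degree } dr \text{ (or zero)}\}\subset\mathbb{R}(x_1,\dots,x_n)$, and let $T\subset A$ be the subsemiring generated by $\mathbb{R}_{\ge0}$ and the elements $y_\alpha=x^\alpha/f$ ($|\alpha|=d$). Then $T$ is archimedean, i.e. for every $a\in A$ there is $N\in\mathbb{Z}$ with $N+a\in T$.
   Context: A semiring is a subset containing $0,1$ and closed under addition and multiplication. $T$ consists exactly of the fractions $p/f^r$ with $r\ge0$ and $p$ homogeneous of degree $dr$ with all coefficients nonnegative. *)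

theory Defs
  imports Complex_Main "HOL-Library.Poly_Mapping" "HOL-Computational_Algebra.Fraction_Field"
begin

text \<open>Multivariate real polynomials: finitely supported maps from exponent vectors
  (finitely supported maps nat to nat, variable i has exponent Poly_Mapping.lookup alpha i) to real coefficients.\<close>

type_synonym mpoly = "(nat \<Rightarrow>\<^sub>0 nat) \<Rightarrow>\<^sub>0 real"
type_synonym ratfun = "mpoly fract"

definition mdeg :: "(nat \<Rightarrow>\<^sub>0 nat) \<Rightarrow> nat" where
  "mdeg alpha = (\<Sum>i\<in>Poly_Mapping.keys alpha. Poly_Mapping.lookup alpha i)"

definition exps_in :: "nat \<Rightarrow> (nat \<Rightarrow>\<^sub>0 nat) \<Rightarrow> bool" where
  "exps_in n alpha \<longleftrightarrow> Poly_Mapping.keys alpha \<subseteq> {..<n}"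

definition poly_in :: "nat \<Rightarrow> mpoly \<Rightarrow> bool" where
  "poly_in n p \<longleftrightarrow> (\<forall>alpha\<in>Poly_Mapping.keys p. exps_in n alpha)"

definition homogeneous :: "nat \<Rightarrow> mpoly \<Rightarrow> bool" where
  "homogeneous k p \<longleftrightarrow> (\<forall>alpha\<in>Poly_Mapping.keys p. mdeg alpha = k)"

definition monom :: "(nat \<Rightarrow>\<^sub>0 nat) \<Rightarrow> mpoly" where
  "monom alpha = Poly_Mapping.single alpha 1"

definition const_poly :: "real \<Rightarrow> mpoly" where
  "const_poly c = Poly_Mapping.single 0 c"

definition to_rf :: "mpoly \<Rightarrow> ratfun" where
  "to_rf p = Fract p 1"

definition ringA :: "nat \<Rightarrow> nat \<Rightarrow> mpoly \<Rightarrow> ratfun set" where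
  "ringA n d f = {to_rf p / to_rf f ^ r | p r. poly_in n p \<and> homogeneous (d * r) p}"

inductive_set semT :: "nat \<Rightarrow> nat \<Rightarrow> mpoly \<Rightarrow> ratfun set" for n d f where
  const: "c \<ge> 0 \<Longrightarrow> to_rf (const_poly c) \<in> semT n d f"
| gen: "exps_in n alpha \<Longrightarrow> mdeg alpha = d \<Longrightarrow> to_rf (monom alpha) / to_rf f \<in> semT n d f"
| add: "a \<in> semT n d f \<Longrightarrow> b \<in> semT n d f \<Longrightarrow> a + b \<in> semT n d f"
| mult: "a \<in> semT n d f \<Longrightarrow> b \<in> semT n d f \<Longrightarrow> a * b \<in> semT n d f"

end

theory Submission imports Defs begin

lemma to_rf_add: "to_rf (p + q) = to_rf p + to_rf q"
  by (simp add: to_rf_def)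
lemma to_rf_mult: "to_rf (p * q) = to_rf p * to_rf q"
  by (simp add: to_rf_def)
lemma to_rf_0: "to_rf 0 = 0"
  by (simp add: to_rf_def Zero_fract_def)
lemma to_rf_1: "to_rf 1 = 1"
  by (simp add: to_rf_def One_fract_def)
lemma to_rf_sum: "to_rf (sum g S) = (\<Sum>x\<in>S. to_rf (g x))"
  by (induction S rule: infinite_finite_induct) (auto simp: to_rf_0 to_rf_add)
lemma to_rf_power: "to_rf (p ^ k) = to_rf p ^ k"
  by (induction k) (auto simp: to_rf_1 to_rf_mult)
lemma to_rf_eq0: "to_rf p = 0 \<longleftrightarrow> p = 0"
  by (simp add: to_rf_def Zero_fract_def eq_fract)

lemma cst_add: "to_rf (const_poly (a + b)) = to_rf (const_poly a) + to_rf (const_poly b)"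
  by (simp add: const_poly_def single_add to_rf_add)
lemma cst_mult: "to_rf (const_poly (a * b)) = to_rf (const_poly a) * to_rf (const_poly b)"
  by (simp add: const_poly_def mult_single to_rf_mult[symmetric])
lemma cst_1: "to_rf (const_poly 1) = 1"
  by (simp add: const_poly_def to_rf_1)
lemma cst_0: "to_rf (const_poly 0) = 0"
  by (simp add: const_poly_def to_rf_0)
lemma cst_diff: "to_rf (const_poly (a - b)) = to_rf (const_poly a) - to_rf (const_poly b)"
  using cst_add[of "a - b" b] by simp
lemma cst_nat: "(of_nat k :: ratfun) = to_rf (const_poly (real k))"
  by (simp add: to_rf_def const_poly_def of_nat_fract)
lemma single_split: "Poly_Mapping.single a c = const_poly c * monom a"
  by (simp add: const_poly_def monom_def mult_single)

lemma poly_expand: "p = (\<Sum>a\<in>Poly_Mapping.keys p. Poly_Mapping.single a (Poly_Mapping.lookup p a))"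
  by (rule poly_mapping_eqI) (simp add: lookup_sum lookup_single when_def in_keys_iff
      sum.delta[OF finite_keys] cong: if_cong)


lemma mdeg_sum: "finite S \<Longrightarrow> Poly_Mapping.keys a \<subseteq> S \<Longrightarrow> mdeg a = (\<Sum>i\<in>S. Poly_Mapping.lookup a i)"
  unfolding mdeg_def by (rule sum.mono_neutral_left) (auto simp: in_keys_iff)

lemma keys_add_nat: "Poly_Mapping.keys ((a::nat \<Rightarrow>\<^sub>0 nat) + b) = Poly_Mapping.keys a \<union> Poly_Mapping.keys b"
  by (auto simp: in_keys_iff lookup_add)

lemma mdeg_add: "mdeg (a + b) = mdeg a + mdeg b"
proof -
  let ?S = "Poly_Mapping.keys a \<union> Poly_Mapping.keys b"
  have "mdeg (a+b) = (\<Sum>i\<in>?S. Poly_Mapping.lookup (a+b) i)"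
    by (rule mdeg_sum) (auto simp: keys_add_nat)
  also have "\<dots> = (\<Sum>i\<in>?S. Poly_Mapping.lookup a i) + (\<Sum>i\<in>?S. Poly_Mapping.lookup b i)"
    by (simp add: lookup_add sum.distrib)
  also have "\<dots> = mdeg a + mdeg b"
    by (simp add: mdeg_sum[symmetric])
  finally show ?thesis .
qed

lemma mdeg_single: "mdeg (Poly_Mapping.single i k) = k"
  by (cases "k = 0") (auto simp: mdeg_def)

lemma mdeg_0_iff: "mdeg a = 0 \<longleftrightarrow> a = 0"
  by (auto simp: mdeg_def in_keys_iff poly_mapping_eqI)

lemma decomp: "mdeg (a::nat \<Rightarrow>\<^sub>0 nat) = k + m \<Longrightarrow> \<exists>b c. a = b + c \<and> mdeg b = k \<and> mdeg c = m"
proof (induction k arbitrary: a)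
  case 0
  then show ?case by (intro exI[of _ 0] exI[of _ a]) (auto simp: mdeg_def)
next
  case (Suc k)
  then have "a \<noteq> 0" using mdeg_0_iff[of a] by simp
  then obtain i where i: "Poly_Mapping.lookup a i \<noteq> 0"
    by (metis keys_eq_empty all_not_in_conv in_keys_iff)
  define a' where "a' = a - Poly_Mapping.single i 1"
  have aa: "a = a' + Poly_Mapping.single i 1"
    using i by (intro poly_mapping_eqI) (auto simp: a'_def lookup_add lookup_minus lookup_single when_def)
  then have "mdeg a' = k + m" using Suc.prems by (simp add: mdeg_add mdeg_single)
  then obtain b c where "a' = b + c" "mdeg b = k" "mdeg c = m" using Suc.IH by blast
  then show ?case
    by (intro exI[of _ "b + Poly_Mapping.single i 1"] exI[of _ c])
       (auto simp: aa mdeg_add mdeg_single ac_simps)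
qed

lemma exps_in_add: "exps_in n (a + b) \<longleftrightarrow> exps_in n a \<and> exps_in n b"
  by (auto simp: exps_in_def keys_add_nat)

lemma monom_add: "monom (a + b) = monom a * monom b"
  by (simp add: monom_def mult_single)


abbreviation cst :: "real \<Rightarrow> ratfun" where "cst c \<equiv> to_rf (const_poly c)"

lemma cst_neg: "cst (- c) = - cst c"
  using cst_diff[of 0 c] by (simp add: cst_0)

lemma T_0: "0 \<in> semT n d f"
  using semT.const[of 0 n d f] by (simp add: cst_0)

lemma T_sum: "finite S \<Longrightarrow> (\<And>x. x \<in> S \<Longrightarrow> g x \<in> semT n d f) \<Longrightarrow> sum g S \<in> semT n d f"
  by (induction S rule: finite_induct) (auto intro: T_0 semT.add)

lemma f_expand: "to_rf f = (\<Sum>g\<in>Poly_Mapping.keys f. cst (Poly_Mapping.lookup f g) * to_rf (monom g))"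
  by (subst poly_expand) (simp add: to_rf_sum single_split to_rf_mult)

lemma bound_gen:
  assumes "poly_in n f" and "homogeneous d f"
    and pos: "\<And>alpha. exps_in n alpha \<Longrightarrow> mdeg alpha = d \<Longrightarrow> Poly_Mapping.lookup f alpha > 0"
    and b: "exps_in n b" "mdeg b = d"
  shows "cst (1 / Poly_Mapping.lookup f b) - to_rf (monom b) / to_rf f \<in> semT n d f"
proof -
  let ?F = "to_rf f"
  let ?y = "\<lambda>g. to_rf (monom g) / ?F"
  have fb: "Poly_Mapping.lookup f b > 0" using pos b by auto
  then have bk: "b \<in> Poly_Mapping.keys f" by (simp add: in_keys_iff)
  then have F0: "?F \<noteq> 0" by (auto simp: to_rf_eq0)
  have "1 = ?F / ?F" using F0 by simp
  also have "\<dots> = (\<Sum>g\<in>Poly_Mapping.keys f. cst (Poly_Mapping.lookup f g) * ?y g)"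
    by (subst (1) f_expand) (simp add: sum_divide_distrib)
  also have "\<dots> = cst (Poly_Mapping.lookup f b) * ?y b + (\<Sum>g\<in>Poly_Mapping.keys f - {b}. cst (Poly_Mapping.lookup f g) * ?y g)"
    using bk by (simp add: sum.remove)
  finally have eq: "1 - cst (Poly_Mapping.lookup f b) * ?y b = (\<Sum>g\<in>Poly_Mapping.keys f - {b}. cst (Poly_Mapping.lookup f g) * ?y g)"
    by (simp add: algebra_simps)
  have R: "1 - cst (Poly_Mapping.lookup f b) * ?y b \<in> semT n d f"
    unfolding eq
  proof (rule T_sum)
    fix g assume g: "g \<in> Poly_Mapping.keys f - {b}"
    then have e: "exps_in n g" "mdeg g = d" using assms(1,2) by (auto simp: poly_in_def homogeneous_def)
    then show "cst (Poly_Mapping.lookup f g) * ?y g \<in> semT n d f"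
      using pos[OF e] by (intro semT.mult semT.const semT.gen) auto
  qed auto
  have "cst (1 / Poly_Mapping.lookup f b) - ?y b = cst (1 / Poly_Mapping.lookup f b) * (1 - cst (Poly_Mapping.lookup f b) * ?y b)"
  proof -
    have "cst (1 / Poly_Mapping.lookup f b) * cst (Poly_Mapping.lookup f b) = 1"
      using fb by (simp add: cst_mult[symmetric] cst_1)
    then show ?thesis by (simp add: algebra_simps)
  qed
  also have "\<dots> \<in> semT n d f" using fb R by (intro semT.mult semT.const) auto
  finally show ?thesis .
qed


lemma mono_T:
  assumes "poly_in n f" and "homogeneous d f"
    and pos: "\<And>alpha. exps_in n alpha \<Longrightarrow> mdeg alpha = d \<Longrightarrow> Poly_Mapping.lookup f alpha > 0"
    and F0: "to_rf f \<noteq> 0"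
  shows "exps_in n a \<Longrightarrow> mdeg a = d * r \<Longrightarrow>
     to_rf (monom a) / to_rf f ^ r \<in> semT n d f \<and> (\<exists>K\<ge>0. cst K - to_rf (monom a) / to_rf f ^ r \<in> semT n d f)"
proof (induction r arbitrary: a)
  case 0
  then have "a = 0" using mdeg_0_iff by simp
  then have "to_rf (monom a) / to_rf f ^ 0 = cst 1" by (simp add: monom_def const_poly_def)
  then show ?case using semT.const[of 1 n d f] semT.const[of 0 n d f] by (auto simp: cst_0 intro!: exI[of _ 1])
next
  case (Suc r)
  then obtain b c where abc: "a = b + c" "mdeg b = d" "mdeg c = d * r" using decomp[of a d "d*r"] by auto
  then have e: "exps_in n b" "exps_in n c" using Suc.prems exps_in_add by auto
  let ?y = "to_rf (monom b) / to_rf f" and ?z = "to_rf (monom c) / to_rf f ^ r"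
  have eq: "to_rf (monom a) / to_rf f ^ Suc r = ?y * ?z"
    using F0 by (simp add: abc monom_add to_rf_mult)
  from Suc.IH[OF e(2) abc(3)] obtain K where K: "K \<ge> 0" "?z \<in> semT n d f" "cst K - ?z \<in> semT n d f" by auto
  have fb: "Poly_Mapping.lookup f b > 0" using pos e abc by auto
  let ?K1 = "1 / Poly_Mapping.lookup f b"
  have y: "?y \<in> semT n d f" using e abc by (intro semT.gen) auto
  have y1: "cst ?K1 - ?y \<in> semT n d f" using bound_gen[OF assms(1,2) pos e(1) abc(2)] by simp
  have "cst (?K1 * K) - ?y * ?z = cst ?K1 * (cst K - ?z) + (cst ?K1 - ?y) * ?z"
    unfolding cst_mult[of ?K1 K] by (simp add: algebra_simps)
  also have "\<dots> \<in> semT n d f" using fb K y1 by (intro semT.add semT.mult semT.const) auto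
  finally show ?case unfolding eq using fb K y
    by (intro conjI semT.mult exI[of _ "?K1 * K"]) auto
qed

theorem mainTheorem6:
  fixes n d :: nat and f :: mpoly
  assumes "n \<ge> 1" and "d \<ge> 1"
    and "poly_in n f" and "homogeneous d f"
    and "\<And>alpha. exps_in n alpha \<Longrightarrow> mdeg alpha = d \<Longrightarrow> Poly_Mapping.lookup f alpha > 0"
  shows "\<forall>a\<in>ringA n d f. \<exists>N::int. of_int N + a \<in> semT n d f"
proof
  fix a assume "a \<in> ringA n d f"
  then obtain p r where a: "a = to_rf p / to_rf f ^ r" and p: "poly_in n p" "homogeneous (d * r) p"
    unfolding ringA_def by auto
  have "exps_in n (Poly_Mapping.single 0 d)" "mdeg (Poly_Mapping.single 0 d) = d"
    using assms(1,2) by (auto simp: exps_in_def mdeg_single)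
  then have "Poly_Mapping.lookup f (Poly_Mapping.single 0 d) > 0" using assms(5) by auto
  then have F0: "to_rf f \<noteq> 0" by (auto simp: to_rf_eq0)
  let ?m = "\<lambda>g. to_rf (monom g) / to_rf f ^ r"
  have aexp: "a = (\<Sum>g\<in>Poly_Mapping.keys p. cst (Poly_Mapping.lookup p g) * ?m g)"
    unfolding a by (subst (1) poly_expand) (simp add: to_rf_sum single_split to_rf_mult sum_divide_distrib)
  have "S \<subseteq> Poly_Mapping.keys p \<Longrightarrow> \<exists>R\<ge>0. cst R + (\<Sum>g\<in>S. cst (Poly_Mapping.lookup p g) * ?m g) \<in> semT n d f" for S
  proof (induction S rule: infinite_finite_induct)
    case (infinite S)
    then show ?case by (meson finite_keys finite_subset)
  next
    case empty
    then show ?case using semT.const[of 0 n d f] by (auto simp: cst_0)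
  next
    case (insert g S)
    then obtain R where R: "R \<ge> 0" "cst R + (\<Sum>g\<in>S. cst (Poly_Mapping.lookup p g) * ?m g) \<in> semT n d f" by auto
    have "exps_in n g" "mdeg g = d * r" using insert.prems p by (auto simp: poly_in_def homogeneous_def)
    from mono_T[OF assms(3,4,5) F0 this] obtain K where K: "K \<ge> 0" "?m g \<in> semT n d f" "cst K - ?m g \<in> semT n d f" by auto
    let ?c = "Poly_Mapping.lookup p g"
    let ?s = "\<Sum>g\<in>S. cst (Poly_Mapping.lookup p g) * ?m g"
    have sum_ins: "(\<Sum>g\<in>insert g S. cst (Poly_Mapping.lookup p g) * ?m g) = cst ?c * ?m g + ?s"
      using insert.hyps by simp
    show ?case
    proof (cases "?c \<ge> 0")
      case True
      then show ?thesis unfolding sum_ins using R K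
        by (intro exI[of _ R]) (metis (no_types, lifting) add.left_commute semT.add semT.const semT.mult)
    next
      case False
      have "cst (R + (- ?c) * K) + (cst ?c * ?m g + ?s) = (cst R + ?s) + cst (- ?c) * (cst K - ?m g)"
      proof -
        have "cst (R + (- ?c)*K) = cst R + cst (- ?c) * cst K" by (simp only: cst_add cst_mult)
        then show ?thesis by (simp add: cst_neg algebra_simps)
      qed
      also have "\<dots> \<in> semT n d f"
      proof -
        have "cst (- ?c) * (cst K - ?m g) \<in> semT n d f" using K False by (intro semT.mult semT.const) auto
        then show ?thesis by (rule semT.add[OF R(2)])
      qed
      finally have mem: "cst (R + (- ?c) * K) + (cst ?c * ?m g + ?s) \<in> semT n d f" .
      have "R + (- ?c) * K \<ge> 0" using R(1) K(1) False mult_nonpos_nonneg[of "Poly_Mapping.lookup p g" K] by simp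
      with mem show ?thesis unfolding sum_ins by blast
    qed
  qed
  then obtain R where R: "R \<ge> 0" "cst R + a \<in> semT n d f" using aexp by auto
  define N where "N = nat (ceiling R)"
  have NR: "real N \<ge> R" unfolding N_def by linarith
  have "of_int (int N) + a = cst (real N - R) + (cst R + a)"
    by (simp add: cst_nat[symmetric] cst_diff)
  also have "\<dots> \<in> semT n d f" using NR by (intro semT.add[OF _ R(2)] semT.const) auto
  finally show "\<exists>N::int. of_int N + a \<in> semT n d f" by blast
qed

end
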